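(* Let $\mathbf{S}_1, \mathbf{S}_2, \mathbf{S}_3 \subset \mathbb{R}^2$ be pairwise disjoint sets with $|\mathbf{S}_i| = 3$ for each $i$, such that the points of $\mathbf{S}_1\cup\mathbf{S}_2\cup\mathbf{S}_3\cup\{0\}$ are in general position (with $0 \notin \bigcup_i \mathbf{S}_i$) and $0 \in \operatorname{conv}(\mathbf{S}_i \cup \mathbf{S}_j)$ for all $i \neq j$. Then at least $3$ colourful triangles contain $0$. Moreover this bound is attained, i.e. $\mu^\Diamond(2) = 3$.
   Context: A colourful triangle is $\operatorname{conv}\{x_1,x_2,x_3\}$ with $x_i \in \mathbf{S}_i$ for each $i$ (closed); distinct choices of $(x_1,x_2,x_3)$ count as distinct. $\mu^\Diamond(d)$ denotes the minimum, over all configurations of pairwise disjoint sets $\mathbf{S}_1,\dots,\mathbf{S}_{d+1}\subset\mathbb{R}^d$ with $|\mathbf{S}_i|=d+1$, in general position together with $0$, satisfying $0 \in \operatorname{conv}(\mathbf{S}_i \cup \mathbf{S}_j)$ for all $i\ne j$, of the number of colourful simplices (one vertex from each $\mathbf{S}_i$) containing $0$. *)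

theory Defs
  imports "HOL-Analysis.Analysis"
begin

definition gen_pos2 :: "(real^2) set \<Rightarrow> bool" where
  "gen_pos2 P \<longleftrightarrow> (\<forall>T. T \<subseteq> P \<and> card T \<le> 3 \<longrightarrow> \<not> affine_dependent T)"

definition admissible_config :: "(real^2) set \<Rightarrow> (real^2) set \<Rightarrow> (real^2) set \<Rightarrow> bool" where
  "admissible_config S1 S2 S3 \<longleftrightarrow>
     card S1 = 3 \<and> card S2 = 3 \<and> card S3 = 3 \<and>
     S1 \<inter> S2 = {} \<and> S1 \<inter> S3 = {} \<and> S2 \<inter> S3 = {} \<and>
     0 \<notin> S1 \<union> S2 \<union> S3 \<and>
     gen_pos2 (S1 \<union> S2 \<union> S3 \<union> {0}) \<and>
     0 \<in> convex hull (S1 \<union> S2) \<and> 0 \<in> convex hull (S1 \<union> S3) \<and>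
     0 \<in> convex hull (S2 \<union> S3)"

definition colourful_count :: "(real^2) set \<Rightarrow> (real^2) set \<Rightarrow> (real^2) set \<Rightarrow> nat" where
  "colourful_count S1 S2 S3 =
     card {(x1, x2, x3). x1 \<in> S1 \<and> x2 \<in> S2 \<and> x3 \<in> S3 \<and>
                         0 \<in> convex hull {x1, x2, x3}}"

end

theory Submission
  imports Defs
begin


definition dt :: "real^2 \<Rightarrow> real^2 \<Rightarrow> real" where
  "dt x y = (x$1) * (y$2) - (x$2) * (y$1)"

definition tri :: "real^2 \<Rightarrow> real^2 \<Rightarrow> real^2 \<Rightarrow> bool" where
  "tri x y z \<longleftrightarrow> ((dt x y > 0) = (dt y z > 0) \<and> (dt y z > 0) = (dt z x > 0))"

lemma dt_anti: "dt y x = - dt x y" by (simp add: dt_def)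

lemma vec2_eq: "(x::real^2) = y \<longleftrightarrow> (x$1) = (y$1) \<and> (x$2) = (y$2)"
  by (simp add: vec_eq_iff forall_2)

lemma dt_zero_collinear:
  assumes "dt u v = 0" "u \<noteq> 0" shows "collinear {0, u, v}"
proof -
  have "\<exists>c. v = c *\<^sub>R u"
  proof (cases "(u$1) = 0")
    case True
    then have "(u$2) \<noteq> 0" using assms(2) by (auto simp: vec2_eq)
    then show ?thesis using assms(1) True
      by (intro exI[of _ "(v$2) / (u$2)"]) (auto simp: vec2_eq dt_def field_simps)
  next
    case False
    then show ?thesis using assms(1)
      by (intro exI[of _ "(v$1) / (u$1)"]) (auto simp: vec2_eq dt_def field_simps)
  qed
  then show ?thesis by (simp add: collinear_lemma)
qed

lemma gp_dt:
  assumes "gen_pos2 P" "u \<in> P" "v \<in> P" "0 \<in> P" "u \<noteq> v" "u \<noteq> 0" "v \<noteq> 0"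
  shows "dt u v \<noteq> 0"
proof
  assume "dt u v = 0"
  then have "collinear {0,u,v}" using dt_zero_collinear assms by auto
  then have "affine_dependent {0,u,v}" using assms by (simp add: collinear_3_eq_affine_dependent)
  moreover have "card {0,u,v} \<le> 3" by (simp add: card_insert_if)
  moreover have "{0,u,v} \<subseteq> P" using assms by auto
  ultimately show False using assms(1) unfolding gen_pos2_def by blast
qed

lemma hull3_tri:
  assumes "dt x y \<noteq> 0" "dt y z \<noteq> 0" "dt z x \<noteq> 0"
  shows "0 \<in> convex hull {x,y,z} \<longleftrightarrow> tri x y z"
proof
  assume "0 \<in> convex hull {x,y,z}"
  then obtain u v w where uvw: "0 \<le> u" "0 \<le> v" "0 \<le> w" "u+v+w=1"
    and e: "0 = u *\<^sub>R x + v *\<^sub>R y + w *\<^sub>R z"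
    by (auto simp: convex_hull_3)
  have e1: "u * (x$1) + v * (y$1) + w * (z$1) = 0" and e2: "u * (x$2) + v * (y$2) + w * (z$2) = 0"
    using e by (auto simp: vec2_eq)
  have r1: "v * dt x y - w * dt z x = (x$1) * (u * (x$2) + v * (y$2) + w * (z$2)) - (x$2) * (u * (x$1) + v * (y$1) + w * (z$1))"
    by (simp add: dt_def algebra_simps)
  have r2: "w * dt y z - u * dt x y = (y$1) * (u * (x$2) + v * (y$2) + w * (z$2)) - (y$2) * (u * (x$1) + v * (y$1) + w * (z$1))"
    by (simp add: dt_def algebra_simps)
  have r3: "u * dt z x - v * dt y z = (z$1) * (u * (x$2) + v * (y$2) + w * (z$2)) - (z$2) * (u * (x$1) + v * (y$1) + w * (z$1))"
    by (simp add: dt_def algebra_simps)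
  have q1: "v * dt x y = w * dt z x" using r1 e1 e2 by simp
  have q2: "w * dt y z = u * dt x y" using r2 e1 e2 by simp
  have q3: "u * dt z x = v * dt y z" using r3 e1 e2 by simp
  have "u \<noteq> 0"
  proof
    assume "u = 0"
    then have "w = 0" "v = 0" using q2 q3 assms by auto
    then show False using uvw \<open>u = 0\<close> by simp
  qed
  moreover have "v \<noteq> 0"
  proof
    assume "v = 0"
    then have "w = 0" "u = 0" using q1 q3 assms by auto
    then show False using uvw \<open>v = 0\<close> by simp
  qed
  moreover have "w \<noteq> 0"
  proof
    assume "w = 0"
    then have "v = 0" "u = 0" using q1 q2 assms by auto
    then show False using uvw \<open>w = 0\<close> by simp
  qed
  ultimately have p: "u > 0" "v > 0" "w > 0" using uvw by auto
  have s1: "(dt x y > 0) = (dt z x > 0)" using q1 p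
    by (metis mult_pos_pos zero_less_mult_pos)
  have s2: "(dt y z > 0) = (dt x y > 0)" using q2 p
    by (metis mult_pos_pos zero_less_mult_pos)
  show "tri x y z" using s1 s2 by (auto simp: tri_def)
next
  assume t: "tri x y z"
  define a where "a = dt y z"
  define b where "b = dt z x"
  define c where "c = dt x y"
  have sgn: "(a > 0 \<and> b > 0 \<and> c > 0) \<or> (a < 0 \<and> b < 0 \<and> c < 0)"
    using t assms unfolding tri_def a_def b_def c_def by auto
  define s where "s = a + b + c"
  have "s \<noteq> 0" using sgn s_def by auto
  have id: "a *\<^sub>R x + b *\<^sub>R y + c *\<^sub>R z = 0"
    unfolding a_def b_def c_def by (simp add: vec2_eq dt_def algebra_simps)
  have "0 = (a/s) *\<^sub>R x + (b/s) *\<^sub>R y + (c/s) *\<^sub>R z"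
  proof -
    have "(a/s) *\<^sub>R x + (b/s) *\<^sub>R y + (c/s) *\<^sub>R z = (1/s) *\<^sub>R (a *\<^sub>R x + b *\<^sub>R y + c *\<^sub>R z)"
      by (simp add: scaleR_add_right)
    then show ?thesis using id by simp
  qed
  moreover have "0 \<le> a/s" "0 \<le> b/s" "0 \<le> c/s" "a/s + b/s + c/s = 1"
    using sgn \<open>s \<noteq> 0\<close> unfolding s_def by (auto simp: divide_simps add_pos_pos add_neg_neg)
  ultimately show "0 \<in> convex hull {x,y,z}" unfolding convex_hull_3 by blast
qed



lemma nocyc:
  assumes "(a$2) \<ge> 0" "(b$2) \<ge> 0" "(c$2) \<ge> 0" "dt a b > 0" "dt b c > 0" "dt c a > 0"
  shows False
proof -
  have id: "dt b c * (a$2) + dt c a * (b$2) + dt a b * (c$2) = 0"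
    by (simp add: dt_def algebra_simps)
  have t1: "dt b c * (a$2) \<ge> 0" "dt c a * (b$2) \<ge> 0" "dt a b * (c$2) \<ge> 0"
    using assms by auto
  then have "dt b c * (a$2) = 0" "dt c a * (b$2) = 0" using id by linarith+
  then have "(a$2) = 0" "(b$2) = 0" using assms by auto
  then have "dt a b = 0" by (simp add: dt_def)
  then show False using assms by simp
qed

definition hat :: "real^2 \<Rightarrow> real^2" where "hat x = (if (x$2) > 0 then x else -x)"

lemma hat2: "(hat x $ 2) \<ge> 0" by (simp add: hat_def)

lemma dt_hat: "dt (hat x) (hat y) = (if ((x$2) > 0) = ((y$2) > 0) then dt x y else - dt x y)"
  by (simp add: hat_def dt_def)

lemma nocyc2:
  "\<not> (dt (hat x) (hat y) > 0 \<and> dt (hat y) (hat z) > 0 \<and> dt (hat z) (hat x) > 0)"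
  using nocyc[OF hat2 hat2 hat2] by blast

lemma boolpar:
  fixes ex ey ez p q r :: bool
  assumes "\<not>((if ex=ey then p else \<not>p) \<and> (if ey=ez then q else \<not>q) \<and> (if ez=ex then r else \<not>r))"
    "\<not>((if ex=ey then \<not>p else p) \<and> (if ey=ez then \<not>q else q) \<and> (if ez=ex then \<not>r else r))"
  shows "(p = q \<and> q = r) = ((ex\<noteq>ey \<and> p = ey) \<noteq> ((ey \<noteq> ez \<and> q = ez) \<noteq> (ez \<noteq> ex \<and> r = ex)))"
  using assms by (cases ex; cases ey; cases ez; cases p; cases q; cases r; simp)

definition G :: "real^2 \<Rightarrow> real^2 \<Rightarrow> bool" where
  "G x y \<longleftrightarrow> (((x$2) > 0) \<noteq> ((y$2) > 0) \<and> ((dt x y > 0) = ((y$2) > 0)))"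

lemma par:
  assumes "dt x y \<noteq> 0" "dt y z \<noteq> 0" "dt z x \<noteq> 0"
  shows "tri x y z = (G x y \<noteq> (G y z \<noteq> G z x))"
proof -
  have c1: "\<not> (dt (hat x) (hat y) > 0 \<and> dt (hat y) (hat z) > 0 \<and> dt (hat z) (hat x) > 0)"
    by (rule nocyc2)
  have c2: "\<not> (dt (hat x) (hat z) > 0 \<and> dt (hat z) (hat y) > 0 \<and> dt (hat y) (hat x) > 0)"
    by (rule nocyc2)
  have n: "dt x y < 0 \<longleftrightarrow> \<not> dt x y > 0" "dt y z < 0 \<longleftrightarrow> \<not> dt y z > 0" "dt z x < 0 \<longleftrightarrow> \<not> dt z x > 0"
    using assms by auto
  have c1': "\<not>((if ((x$2)>0)=((y$2)>0) then dt x y > 0 else \<not>dt x y > 0) \<and> (if ((y$2)>0)=((z$2)>0) then dt y z > 0 else \<not>dt y z > 0) \<and> (if ((z$2)>0)=((x$2)>0) then dt z x > 0 else \<not>dt z x > 0))"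
    using c1 n unfolding dt_hat by (auto split: if_splits)
  have c2': "\<not>((if ((x$2)>0)=((y$2)>0) then \<not>dt x y > 0 else dt x y > 0) \<and> (if ((y$2)>0)=((z$2)>0) then \<not>dt y z > 0 else dt y z > 0) \<and> (if ((z$2)>0)=((x$2)>0) then \<not>dt z x > 0 else dt z x > 0))"
    using c2 n unfolding dt_hat dt_anti[of x z] dt_anti[of z y] dt_anti[of y x] by (auto split: if_splits)
  have bp: "(dt x y > 0 = (dt y z > 0) \<and> (dt y z > 0) = (dt z x > 0)) =
     ((((x$2)>0)\<noteq>((y$2)>0) \<and> (dt x y > 0) = ((y$2)>0)) \<noteq> ((((y$2)>0) \<noteq> ((z$2)>0) \<and> (dt y z > 0) = ((z$2)>0)) \<noteq> (((z$2)>0) \<noteq> ((x$2)>0) \<and> (dt z x > 0) = ((x$2)>0))))"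
    by (rule boolpar[OF c1' c2'])
  show ?thesis unfolding tri_def G_def by (rule bp)
qed

lemma exch_real:
  fixes A B C a b c :: real
  assumes nz: "A \<noteq> 0" "B \<noteq> 0" "C \<noteq> 0" "a \<noteq> 0" "b \<noteq> 0" "c \<noteq> 0"
    and sg: "(A>0 \<and> B>0 \<and> C>0) \<or> (A<0 \<and> B<0 \<and> C<0)"
    and n1: "\<not>((a>0) = (A>0) \<and> (A>0) = (-b>0))"
    and n2: "\<not>((b>0) = (B>0) \<and> (B>0) = (-c>0))"
    and n3: "\<not>((c>0) = (C>0) \<and> (C>0) = (-a>0))"
    and id: "B*a + C*b + A*c = 0"
  shows False
proof -
  have sq: "(a>0 \<and> b>0 \<and> c>0) \<or> (a<0 \<and> b<0 \<and> c<0)"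
    using nz sg n1 n2 n3
    by (cases "a > 0"; cases "b > 0"; cases "c > 0"; cases "A > 0"; simp; linarith)
  show False
  proof (cases "A > 0")
    case True
    then have "B > 0" "C > 0" using sg by auto
    from sq show False
    proof
      assume h: "a>0 \<and> b>0 \<and> c>0"
      have "B*a>0" "C*b>0" "A*c>0" using h True \<open>B>0\<close> \<open>C>0\<close> by simp_all
      then show False using id by linarith
    next
      assume h: "a<0 \<and> b<0 \<and> c<0"
      have "B*a<0" "C*b<0" "A*c<0" using h True \<open>B>0\<close> \<open>C>0\<close> by (simp_all add: mult_pos_neg)
      then show False using id by linarith
    qed
  next
    case False
    then have "A < 0" "B < 0" "C < 0" using sg by auto
    from sq show False
    proof
      assume h: "a>0 \<and> b>0 \<and> c>0"
      have "B*a<0" "C*b<0" "A*c<0" using h \<open>A<0\<close> \<open>B<0\<close> \<open>C<0\<close> by (simp_all add: mult_neg_pos)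
      then show False using id by linarith
    next
      assume h: "a<0 \<and> b<0 \<and> c<0"
      have "B*a>0" "C*b>0" "A*c>0" using h \<open>A<0\<close> \<open>B<0\<close> \<open>C<0\<close> by (simp_all add: mult_neg_neg)
      then show False using id by linarith
    qed
  qed
qed
lemma exch:
  assumes "dt q y \<noteq> 0" "dt q z \<noteq> 0" "dt q p \<noteq> 0" "dt y z \<noteq> 0" "dt z p \<noteq> 0" "dt p y \<noteq> 0"
    and "tri y z p"
  shows "tri q y z \<or> tri q z p \<or> tri q p y"
proof (rule ccontr)
  assume nt: "\<not> (tri q y z \<or> tri q z p \<or> tri q p y)"
  have id: "dt z p * dt q y + dt p y * dt q z + dt y z * dt q p = 0"
    by (simp add: dt_def algebra_simps)
  have n1: "\<not>((dt q y>0) = (dt y z>0) \<and> (dt y z>0) = (- dt q z>0))"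
    using nt unfolding tri_def by (simp add: dt_def[of "z" "q"] dt_def[of "q" "z"] algebra_simps)
  have n2: "\<not>((dt q z>0) = (dt z p>0) \<and> (dt z p>0) = (- dt q p>0))"
    using nt unfolding tri_def by (simp add: dt_def[of "p" "q"] dt_def[of "q" "p"] algebra_simps)
  have n3: "\<not>((dt q p>0) = (dt p y>0) \<and> (dt p y>0) = (- dt q y>0))"
    using nt unfolding tri_def by (simp add: dt_def[of "y" "q"] dt_def[of "q" "y"] algebra_simps)
  have sg: "(dt y z > 0 \<and> dt z p > 0 \<and> dt p y > 0) \<or> (dt y z < 0 \<and> dt z p < 0 \<and> dt p y < 0)"
    using assms(4-7) unfolding tri_def by auto
  show False by (rule exch_real[OF assms(4,5,6,1,2,3) sg n1 n2 n3 id])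
qed

lemma half:
  assumes "\<forall>p\<in>P. tri p r x \<and> dt p r \<noteq> 0 \<and> dt x p \<noteq> 0" "dt r x \<noteq> 0"
  shows "0 \<notin> convex hull P"
proof
  define H where "H = {p. dt r x * (dt p r + dt x p) > 0}"
  have lin: "dt r x * (dt (u *\<^sub>R a + v *\<^sub>R b) r + dt x (u *\<^sub>R a + v *\<^sub>R b))
     = u * (dt r x * (dt a r + dt x a)) + v * (dt r x * (dt b r + dt x b))" for u v a b
    by (simp add: dt_def algebra_simps)
  have cv: "0 < u * (dt r x * (dt a r + dt x a)) + v * (dt r x * (dt b r + dt x b))"
    if h: "0 < dt r x * (dt a r + dt x a)" "0 < dt r x * (dt b r + dt x b)" "0 \<le> u \<and> 0 \<le> v \<and> u + v = 1"
    for a b :: "real^2" and u v :: real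
    proof (cases "u = 0")
      case True then show ?thesis using h by simp
    next
      case False
      then have "u * (dt r x * (dt a r + dt x a)) > 0" using h by simp
      moreover have "v * (dt r x * (dt b r + dt x b)) \<ge> 0" using h by simp
      ultimately show ?thesis by linarith
    qed
  have "convex H"
    unfolding convex_def H_def using cv by (simp add: lin)
  moreover have "P \<subseteq> H"
  proof
    fix p assume "p \<in> P"
    then have "tri p r x" "dt p r \<noteq> 0" "dt x p \<noteq> 0" using assms by auto
    then show "p \<in> H" unfolding H_def tri_def using assms(2)
      by (cases "dt r x > 0") (auto intro: mult_pos_pos mult_neg_neg)
  qed
  ultimately have "convex hull P \<subseteq> H" by (rule hull_minimal[rotated])
  moreover assume "0 \<in> convex hull P"
  ultimately show False unfolding H_def by (auto simp: dt_def)
qed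



lemma tri_cyc: "tri x y z = tri y z x" by (auto simp: tri_def)
lemma tri_swap:
  assumes "dt x y \<noteq> 0" "dt y z \<noteq> 0" "dt z x \<noteq> 0"
  shows "tri x y z = tri y x z"
proof -
  have "dt y x = - dt x y" "dt x z = - dt z x" "dt z y = - dt y z" by (simp_all add: dt_def)
  then show ?thesis using assms unfolding tri_def by auto
qed

lemma tri_from_hull:
  assumes ok: "\<And>u v. u \<in> P \<Longrightarrow> v \<in> P \<Longrightarrow> u \<noteq> v \<Longrightarrow> dt u v \<noteq> 0"
    and "S \<subseteq> P" "0 \<notin> P" "0 \<in> convex hull S"
  shows "\<exists>x\<in>S. \<exists>y\<in>S. \<exists>z\<in>S. x \<noteq> y \<and> y \<noteq> z \<and> x \<noteq> z \<and> tri x y z"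
proof -
  obtain T where T: "finite T" "T \<subseteq> S" "card T \<le> 3" "0 \<in> convex hull T"
    using assms(4) caratheodory[of S] by auto
  have TP: "T \<subseteq> P" using T assms by auto
  have "card T = 0 \<or> card T = 1 \<or> card T = 2 \<or> card T = 3" using T by linarith
  moreover have "card T \<noteq> 0"
  proof
    assume "card T = 0" then have "T = {}" using T by simp
    then show False using T by simp
  qed
  moreover have "card T \<noteq> 1"
  proof
    assume "card T = 1" then obtain a where "T = {a}" by (auto simp: card_1_singleton_iff)
    then show False using T TP assms(3) by auto
  qed
  moreover have "card T \<noteq> 2"
  proof
    assume "card T = 2" then obtain a b where ab: "T = {a,b}" "a \<noteq> b" by (auto simp: card_2_iff)
    then obtain u v where uv: "0 \<le> u" "0 \<le> v" "u + v = 1" and e: "0 = u *\<^sub>R a + v *\<^sub>R b"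
      using T by (auto simp: convex_hull_2)
    have e1: "u * (a$1) + v * (b$1) = 0" and e2: "u * (a$2) + v * (b$2) = 0"
      using e by (auto simp: vec2_eq)
    have r: "v * dt a b = (a$1) * (u * (a$2) + v * (b$2)) - (a$2) * (u * (a$1) + v * (b$1))"
      by (simp add: dt_def algebra_simps)
    have "dt a b \<noteq> 0" using ok ab TP by auto
    then have "v = 0" using r e1 e2 by simp
    then have "a = 0" using e uv by simp
    then show False using ab TP assms(3) by auto
  qed
  ultimately have "card T = 3" by blast
  then obtain x y z where xyz: "T = {x,y,z}" "x \<noteq> y" "y \<noteq> z" "x \<noteq> z" by (auto simp: card_3_iff)
  have "dt x y \<noteq> 0" "dt y z \<noteq> 0" "dt z x \<noteq> 0" using ok xyz TP by auto
  then have "tri x y z" using hull3_tri T xyz by auto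
  then show ?thesis using xyz T by blast
qed

lemma core:
  assumes ok: "\<And>u v. u \<in> P \<Longrightarrow> v \<in> P \<Longrightarrow> u \<noteq> v \<Longrightarrow> dt u v \<noteq> 0"
    and sub: "A \<subseteq> P" "B \<subseteq> P" "C \<subseteq> P"
    and dis: "A \<inter> B = {}" "A \<inter> C = {}" "B \<inter> C = {}"
    and m: "m \<in> A" "m' \<in> A" "m \<noteq> m'"
    and allc: "\<forall>c\<in>C. tri c m m'" and Cne: "C \<noteq> {}"
    and nob: "\<forall>b\<in>B. \<forall>c\<in>C. \<not> tri b c m \<and> \<not> tri b m' c"
  shows "0 \<notin> convex hull (B \<union> C)"
proof -
  obtain c0 where c0: "c0 \<in> C" using Cne by auto
  have allb: "tri b m m'" if b: "b \<in> B" for b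
  proof -
    have ne: "b \<noteq> c0" "b \<noteq> m" "b \<noteq> m'" "c0 \<noteq> m" "c0 \<noteq> m'" using dis b c0 m by auto
    have P: "b \<in> P" "c0 \<in> P" "m \<in> P" "m' \<in> P" using sub b c0 m by auto
    have "tri b c0 m \<or> tri b m m' \<or> tri b m' c0"
      by (rule exch) (use ok ne P m allc c0 in auto)
    then show ?thesis using nob b c0 by auto
  qed
  show ?thesis
  proof (rule half[where r = m and x = m'])
    show "dt m m' \<noteq> 0" using ok m sub by auto
    show "\<forall>p\<in>B \<union> C. tri p m m' \<and> dt p m \<noteq> 0 \<and> dt m' p \<noteq> 0"
    proof
      fix p assume p: "p \<in> B \<union> C"
      then have "p \<noteq> m" "p \<noteq> m'" "p \<in> P" using dis m sub by auto
      then show "tri p m m' \<and> dt p m \<noteq> 0 \<and> dt m' p \<noteq> 0"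
        using allb allc p ok m sub by auto
    qed
  qed
qed



lemma boolbox:
  fixes t1 t2 t3 t4 t5 t6 t7 t8 ab ab' a'b a'b' bc bc' b'c b'c' ca ca' c'a c'a' :: bool
  assumes "t1 = (ab \<noteq> (bc \<noteq> ca))" "t2 = (ab \<noteq> (bc' \<noteq> c'a))"
   "t3 = (ab' \<noteq> (b'c \<noteq> ca))" "t4 = (ab' \<noteq> (b'c' \<noteq> c'a))"
   "t5 = (a'b \<noteq> (bc \<noteq> ca'))" "t6 = (a'b \<noteq> (bc' \<noteq> c'a'))"
   "t7 = (a'b' \<noteq> (b'c \<noteq> ca'))" "t8 = (a'b' \<noteq> (b'c' \<noteq> c'a'))"
   "t1" "\<not>t2" "\<not>t3" "\<not>t4" "\<not>t5" "\<not>t6" "\<not>t7" "\<not>t8"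
  shows False
  using assms by argo

lemma perms:
  assumes "dt x y \<noteq> 0" "dt y z \<noteq> 0" "dt z x \<noteq> 0" "tri x y z"
  shows "tri y z x" "tri z x y" "tri y x z" "tri x z y" "tri z y x"
  using assms tri_cyc[of x y z] tri_cyc[of y z x] tri_swap[of x y z] tri_swap[of y z x] tri_swap[of z x y]
  by (auto simp: dt_anti[of x y] dt_anti[of y z] dt_anti[of z x])

lemma wit:
  "a \<in> A \<Longrightarrow> b \<in> B \<Longrightarrow> r \<in> A \<union> B \<Longrightarrow> r \<noteq> a \<Longrightarrow> r \<noteq> b \<Longrightarrow> tri a b r \<Longrightarrow>
   \<exists>a\<in>A. \<exists>b\<in>B. \<exists>r\<in>A \<union> B. r \<noteq> a \<and> r \<noteq> b \<and> tri a b r"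
  by blast

lemma exists_col:
  assumes ok: "\<And>u v. u \<in> P \<Longrightarrow> v \<in> P \<Longrightarrow> u \<noteq> v \<Longrightarrow> dt u v \<noteq> 0"
    and sub: "S1 \<subseteq> P" "S2 \<subseteq> P" "S3 \<subseteq> P" and z: "0 \<notin> P"
    and dis: "S1 \<inter> S2 = {}" "S1 \<inter> S3 = {}" "S2 \<inter> S3 = {}"
    and ne: "S1 \<noteq> {}" "S2 \<noteq> {}" "S3 \<noteq> {}"
    and h12: "0 \<in> convex hull (S1 \<union> S2)" and h13: "0 \<in> convex hull (S1 \<union> S3)"
    and h23: "0 \<in> convex hull (S2 \<union> S3)"
  shows "\<exists>a\<in>S1. \<exists>b\<in>S2. \<exists>c\<in>S3. tri a b c"
proof (rule ccontr)
  assume H: "\<not> ?thesis"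
  have okP: "dt u v \<noteq> 0" if "u \<in> S1 \<union> S2 \<union> S3" "v \<in> S1 \<union> S2 \<union> S3" "u \<noteq> v" for u v
    by (rule ok) (use that sub in auto)
  obtain x y z where xyz: "x \<in> S1 \<union> S2" "y \<in> S1 \<union> S2" "z \<in> S1 \<union> S2" "x \<noteq> y" "y \<noteq> z" "x \<noteq> z" "tri x y z"
    using tri_from_hull[OF ok _ z h12] sub by blast
  have dxyz: "dt x y \<noteq> 0" "dt y z \<noteq> 0" "dt z x \<noteq> 0" using okP xyz by auto
  note pxyz = perms[OF dxyz xyz(7)]
  have "\<exists>a\<in>S1. \<exists>b\<in>S2. \<exists>r\<in>S1 \<union> S2. r \<noteq> a \<and> r \<noteq> b \<and> tri a b r"
  proof (cases "x \<in> S1 \<and> y \<in> S1 \<and> z \<in> S1")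
    case True
    obtain b where b: "b \<in> S2" using ne by auto
    have bn: "b \<noteq> x" "b \<noteq> y" "b \<noteq> z" using b True dis by auto
    have dj: "tri b x y \<or> tri b y z \<or> tri b z x"
      by (rule exch) (use okP xyz bn b in auto)
    have m1: "tri x b y" if "tri b x y"
    proof -
      have "dt b x \<noteq> 0" "dt x y \<noteq> 0" "dt y b \<noteq> 0" by (rule okP; use xyz bn b in auto)+
      then show ?thesis using tri_swap[of b x y] that by simp
    qed
    have m2: "tri y b z" if "tri b y z"
    proof -
      have "dt b y \<noteq> 0" "dt y z \<noteq> 0" "dt z b \<noteq> 0" by (rule okP; use xyz bn b in auto)+
      then show ?thesis using tri_swap[of b y z] that by simp
    qed
    have m3: "tri z b x" if "tri b z x"
    proof -
      have "dt b z \<noteq> 0" "dt z x \<noteq> 0" "dt x b \<noteq> 0" by (rule okP; use xyz bn b in auto)+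
      then show ?thesis using tri_swap[of b z x] that by simp
    qed
    from dj show ?thesis
    proof (elim disjE)
      assume "tri b x y" then show ?thesis
        using m1 wit[of x S1 b S2 y] True b xyz bn by auto
    next
      assume "tri b y z" then show ?thesis
        using m2 wit[of y S1 b S2 z] True b xyz bn by auto
    next
      assume "tri b z x" then show ?thesis
        using m3 wit[of z S1 b S2 x] True b xyz bn by auto
    qed
  next
    case nA: False
    show ?thesis
    proof (cases "x \<in> S2 \<and> y \<in> S2 \<and> z \<in> S2")
      case True
      obtain a where a: "a \<in> S1" using ne by auto
      have an: "a \<noteq> x" "a \<noteq> y" "a \<noteq> z" using a True dis by auto
      have "tri a x y \<or> tri a y z \<or> tri a z x"
        by (rule exch) (use okP xyz an a in auto)
      then show ?thesis
      proof (elim disjE)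
        assume "tri a x y" then show ?thesis using wit[of a S1 x S2 y] True a xyz an by auto
      next
        assume "tri a y z" then show ?thesis using wit[of a S1 y S2 z] True a xyz an by auto
      next
        assume "tri a z x" then show ?thesis using wit[of a S1 z S2 x] True a xyz an by auto
      qed
    next
      case nB: False
      have "(x\<in>S1\<and>y\<in>S2) \<or> (y\<in>S1\<and>z\<in>S2) \<or> (z\<in>S1\<and>x\<in>S2) \<or> (y\<in>S1\<and>x\<in>S2) \<or> (z\<in>S1\<and>y\<in>S2) \<or> (x\<in>S1\<and>z\<in>S2)"
        using nA nB xyz(1-3) by blast
      then show ?thesis
      proof (elim disjE conjE)
        assume "x\<in>S1" "y\<in>S2" then show ?thesis using wit[of x S1 y S2 z] xyz by auto
      next
        assume "y\<in>S1" "z\<in>S2" then show ?thesis using wit[of y S1 z S2 x] xyz pxyz by auto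
      next
        assume "z\<in>S1" "x\<in>S2" then show ?thesis using wit[of z S1 x S2 y] xyz pxyz by auto
      next
        assume "y\<in>S1" "x\<in>S2" then show ?thesis using wit[of y S1 x S2 z] xyz pxyz by auto
      next
        assume "z\<in>S1" "y\<in>S2" then show ?thesis using wit[of z S1 y S2 x] xyz pxyz by auto
      next
        assume "x\<in>S1" "z\<in>S2" then show ?thesis using wit[of x S1 z S2 y] xyz pxyz by auto
      qed
    qed
  qed
  then obtain a b r where abr: "a \<in> S1" "b \<in> S2" "r \<in> S1 \<union> S2" "r \<noteq> a" "r \<noteq> b" "tri a b r"
    by blast
  have ab: "a \<noteq> b" using abr dis by auto
  have dabr: "dt a b \<noteq> 0" "dt b r \<noteq> 0" "dt r a \<noteq> 0" using okP abr ab by auto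
  have step: "tri c b r \<or> tri c r a" if c: "c \<in> S3" for c
  proof -
    have cn: "c \<noteq> a" "c \<noteq> b" "c \<noteq> r" using c abr dis by auto
    have "tri c a b \<or> tri c b r \<or> tri c r a"
      by (rule exch) (use okP abr cn c ab in auto)
    moreover have "\<not> tri c a b"
    proof
      assume "tri c a b"
      then have "tri a b c" using tri_cyc[of c a b] by simp
      then show False using H abr c by blast
    qed
    ultimately show ?thesis by blast
  qed
  show False
  proof (cases "r \<in> S1")
    case True
    have allc: "\<forall>c\<in>S3. tri c r a"
    proof
      fix c assume c: "c \<in> S3"
      have cn: "c \<noteq> a" "c \<noteq> b" "c \<noteq> r" using c abr dis by auto
      have "\<not> tri c b r"
      proof
        assume "tri c b r"
        moreover have "dt b r \<noteq> 0" "dt r c \<noteq> 0" "dt c b \<noteq> 0" by (rule okP; use cn abr c in auto)+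
        ultimately have "tri r b c" using tri_swap[of b r c] tri_cyc[of c b r] by simp
        then show False using H True abr c by blast
      qed
      then show "tri c r a" using step c by blast
    qed
    have "0 \<notin> convex hull (S2 \<union> S3)"
    proof (rule core[OF ok sub(1,2,3) dis(1,2,3) True abr(1) abr(4) allc ne(3)])
      show "\<forall>b\<in>S2. \<forall>c\<in>S3. \<not> tri b c r \<and> \<not> tri b a c"
      proof (intro ballI)
        fix b' c assume bc: "b' \<in> S2" "c \<in> S3"
        have n: "b' \<noteq> c" "b' \<noteq> r" "c \<noteq> r" "b' \<noteq> a" "c \<noteq> a" using bc True abr dis by auto
        show "\<not> tri b' c r \<and> \<not> tri b' a c"
        proof
          show "\<not> tri b' c r"
          proof
            assume "tri b' c r"
            then have "tri r b' c" using tri_cyc[of b' c r] tri_cyc[of c r b'] by simp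
            then show False using H True bc by blast
          qed
          show "\<not> tri b' a c"
          proof
            assume "tri b' a c"
            moreover have "dt b' a \<noteq> 0" "dt a c \<noteq> 0" "dt c b' \<noteq> 0" by (rule okP; use n bc abr in auto)+
            ultimately have "tri a b' c" using tri_swap[of b' a c] by simp
            then show False using H abr bc by blast
          qed
        qed
      qed
    qed
    then show False using h23 by blast
  next
    case False
    then have r2: "r \<in> S2" using abr by auto
    have allc: "\<forall>c\<in>S3. tri c b r"
    proof
      fix c assume c: "c \<in> S3"
      have cn: "c \<noteq> a" "c \<noteq> b" "c \<noteq> r" using c abr dis by auto
      have "\<not> tri c r a"
      proof
        assume "tri c r a"
        moreover have "dt r a \<noteq> 0" "dt a c \<noteq> 0" "dt c r \<noteq> 0" by (rule okP; use cn abr c in auto)+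
        ultimately have "tri a r c" using tri_swap[of r a c] tri_cyc[of c r a] by simp
        then show False using H r2 abr c by blast
      qed
      then show "tri c b r" using step c by blast
    qed
    have "0 \<notin> convex hull (S1 \<union> S3)"
    proof (rule core[OF ok sub(2,1,3) _ dis(3,2) abr(2) r2 abr(5)[symmetric] allc ne(3)])
      show "S2 \<inter> S1 = {}" using dis by auto
      show "\<forall>a\<in>S1. \<forall>c\<in>S3. \<not> tri a c b \<and> \<not> tri a r c"
      proof (intro ballI)
        fix a' c assume ac: "a' \<in> S1" "c \<in> S3"
        have n: "a' \<noteq> c" "a' \<noteq> r" "c \<noteq> r" "a' \<noteq> b" "c \<noteq> b" using ac r2 abr dis by auto
        show "\<not> tri a' c b \<and> \<not> tri a' r c"
        proof
          show "\<not> tri a' c b"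
          proof
            assume "tri a' c b"
            moreover have "dt c a' \<noteq> 0" "dt a' b \<noteq> 0" "dt b c \<noteq> 0" by (rule okP; use n ac abr in auto)+
            ultimately have "tri a' b c" using tri_swap[of c a' b] tri_cyc[of c a' b] by simp
            then show False using H abr ac by blast
          qed
          show "\<not> tri a' r c"
          proof
            assume "tri a' r c"
            then show False using H r2 ac by blast
          qed
        qed
      qed
    qed
    then show False using h13 by blast
  qed
qed



lemma box_contra:
  assumes d: "\<forall>x\<in>{a,a'}. \<forall>y\<in>{b,b'}. \<forall>z\<in>{c,c'}. dt x y \<noteq> 0 \<and> dt y z \<noteq> 0 \<and> dt z x \<noteq> 0"
    and "tri a b c" "\<not> tri a b c'" "\<not> tri a b' c" "\<not> tri a b' c'"
    "\<not> tri a' b c" "\<not> tri a' b c'" "\<not> tri a' b' c" "\<not> tri a' b' c'"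
  shows False
proof -
  have p: "tri x y z = (G x y \<noteq> (G y z \<noteq> G z x))" if "x \<in> {a,a'}" "y \<in> {b,b'}" "z \<in> {c,c'}" for x y z
    using d that par by blast
  show False
    by (rule boolbox[OF p[of a b c] p[of a b c'] p[of a b' c] p[of a b' c'] p[of a' b c] p[of a' b c']
        p[of a' b' c] p[of a' b' c'] assms(2-9)]) auto
qed

lemma pick3: "card S = 3 \<Longrightarrow> \<exists>z\<in>S. z \<noteq> u \<and> z \<noteq> v"
  by (auto simp: card_3_iff)

lemma lower:
  assumes adm: "admissible_config S1 S2 S3"
  shows "3 \<le> colourful_count S1 S2 S3"
proof -
  have c3: "card S1 = 3" "card S2 = 3" "card S3 = 3"
    and dis: "S1 \<inter> S2 = {}" "S1 \<inter> S3 = {}" "S2 \<inter> S3 = {}"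
    and z0: "0 \<notin> S1 \<union> S2 \<union> S3"
    and gp: "gen_pos2 (S1 \<union> S2 \<union> S3 \<union> {0})"
    and h: "0 \<in> convex hull (S1 \<union> S2)" "0 \<in> convex hull (S1 \<union> S3)" "0 \<in> convex hull (S2 \<union> S3)"
    using adm unfolding admissible_config_def by blast+
  define P where "P = S1 \<union> S2 \<union> S3"
  have z: "0 \<notin> P" using z0 P_def by simp
  have sub: "S1 \<subseteq> P" "S2 \<subseteq> P" "S3 \<subseteq> P" unfolding P_def by auto
  have ok: "dt u v \<noteq> 0" if "u \<in> P" "v \<in> P" "u \<noteq> v" for u v
  proof (rule gp_dt[OF gp])
    show "u \<in> S1 \<union> S2 \<union> S3 \<union> {0}" "v \<in> S1 \<union> S2 \<union> S3 \<union> {0}" "0 \<in> S1 \<union> S2 \<union> S3 \<union> {0}"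
      using that P_def by auto
    show "u \<noteq> v" by (rule that(3))
    show "u \<noteq> 0" "v \<noteq> 0" using that z by auto
  qed
  have fin: "finite S1" "finite S2" "finite S3" using c3 by (auto intro: card_ge_0_finite)
  have ne: "S1 \<noteq> {}" "S2 \<noteq> {}" "S3 \<noteq> {}" using c3 by auto
  have "\<exists>a\<in>S1. \<exists>b\<in>S2. \<exists>c\<in>S3. tri a b c"
    by (rule exists_col[OF ok sub z dis ne h])
  then obtain a b c where abc: "a \<in> S1" "b \<in> S2" "c \<in> S3" "tri a b c"
    by blast
  define T where "T = {(x1, x2, x3). x1 \<in> S1 \<and> x2 \<in> S2 \<and> x3 \<in> S3 \<and> 0 \<in> convex hull {x1, x2, x3}}"
  have cc: "colourful_count S1 S2 S3 = card T" unfolding colourful_count_def T_def by simp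
  have dd: "dt x y \<noteq> 0 \<and> dt y z \<noteq> 0 \<and> dt z x \<noteq> 0" if "x \<in> S1" "y \<in> S2" "z \<in> S3" for x y z
  proof -
    have ne3: "x \<noteq> y" "y \<noteq> z" "z \<noteq> x" using that dis by auto
    have "x \<in> P" "y \<in> P" "z \<in> P" using that sub by auto
    then show ?thesis using ok ne3 by blast
  qed
  have memT: "(x,y,z) \<in> T \<longleftrightarrow> tri x y z" if "x \<in> S1" "y \<in> S2" "z \<in> S3" for x y z
  proof -
    have "(x,y,z) \<in> T \<longleftrightarrow> 0 \<in> convex hull {x,y,z}" unfolding T_def using that by simp
    also have "\<dots> \<longleftrightarrow> tri x y z" using hull3_tri dd[OF that] by blast
    finally show ?thesis .
  qed
  have finT: "finite T"
  proof (rule finite_subset)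
    show "T \<subseteq> S1 \<times> S2 \<times> S3" unfolding T_def by auto
    show "finite (S1 \<times> S2 \<times> S3)" using fin by simp
  qed
  have abcT: "(a,b,c) \<in> T" using memT abc by blast
  show ?thesis
  proof (rule ccontr)
    assume "\<not> 3 \<le> colourful_count S1 S2 S3"
    then have "card T \<le> 2" using cc by simp
    moreover have "card (T - {(a,b,c)}) = card T - 1" using abcT finT by (simp add: card_Diff_singleton)
    ultimately have "card (T - {(a,b,c)}) \<le> Suc 0" by linarith
    moreover have "finite (T - {(a,b,c)})" using finT by simp
    ultimately have one: "\<forall>t1\<in>T - {(a,b,c)}. \<forall>t2\<in>T - {(a,b,c)}. t1 = t2"
      using card_le_Suc0_iff_eq[of "T - {(a,b,c)}"] by simp
    obtain p q r where pqr: "\<forall>t\<in>T - {(a,b,c)}. t = (p,q,r)"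
    proof (cases "T - {(a,b,c)} = {}")
      case True
      have "\<forall>t\<in>T - {(a,b,c)}. t = (a,b,c)" using True by blast
      then show ?thesis by (rule that)
    next
      case False
      then obtain t where t: "t \<in> T - {(a,b,c)}" by blast
      have "\<forall>t'\<in>T - {(a,b,c)}. t' = (fst t, fst (snd t), snd (snd t))"
      proof
        fix t' assume "t' \<in> T - {(a,b,c)}"
        then have "t' = t" using one t by blast
        then show "t' = (fst t, fst (snd t), snd (snd t))" by simp
      qed
      then show ?thesis by (rule that)
    qed
    obtain a' where a': "a' \<in> S1" "a' \<noteq> a" "a' \<noteq> p" using pick3[OF c3(1)] by blast
    obtain b' where b': "b' \<in> S2" "b' \<noteq> b" "b' \<noteq> q" using pick3[OF c3(2)] by blast
    obtain c' where c': "c' \<in> S3" "c' \<noteq> c" "c' \<noteq> r" using pick3[OF c3(3)] by blast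
    have nt: "\<not> tri x y z" if "x \<in> {a,a'}" "y \<in> {b,b'}" "z \<in> {c,c'}" "(x,y,z) \<noteq> (a,b,c)" for x y z
    proof
      assume tr: "tri x y z"
      have m: "x \<in> S1" "y \<in> S2" "z \<in> S3" using that abc a' b' c' by auto
      have "(x,y,z) \<in> T" using memT[OF m] tr by simp
      then have "(x,y,z) \<in> T - {(a,b,c)}" using that(4) by simp
      then have "(x,y,z) = (p,q,r)" using pqr by blast
      then have "x = p" "y = q" "z = r" by simp_all
      then have "x = a" "y = b" "z = c" using that(1-3) a' b' c' by auto
      then show False using that(4) by simp
    qed
    have d: "\<forall>x\<in>{a,a'}. \<forall>y\<in>{b,b'}. \<forall>z\<in>{c,c'}. dt x y \<noteq> 0 \<and> dt y z \<noteq> 0 \<and> dt z x \<noteq> 0"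
    proof (intro ballI)
      fix x y z assume "x \<in> {a,a'}" "y \<in> {b,b'}" "z \<in> {c,c'}"
      then have "x \<in> S1" "y \<in> S2" "z \<in> S3" using abc a' b' c' by auto
      then show "dt x y \<noteq> 0 \<and> dt y z \<noteq> 0 \<and> dt z x \<noteq> 0" by (rule dd)
    qed
    show False
      by (rule box_contra[OF d abc(4) nt nt nt nt nt nt nt]) (use a' b' c' in auto)
  qed
qed



lemma gen_pos2_I:
  assumes fQ: "finite Q" and "\<forall>x\<in>Q. \<forall>y\<in>Q. \<forall>z\<in>Q. x \<noteq> y \<and> y \<noteq> z \<and> x \<noteq> z \<longrightarrow> dt (x - y) (z - y) \<noteq> 0"
  shows "gen_pos2 Q"
  unfolding gen_pos2_def
proof (intro allI impI)
  fix T assume T: "T \<subseteq> Q \<and> card T \<le> 3"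
  show "\<not> affine_dependent T"
  proof -
    have fin: "finite T" using T fQ finite_subset by blast
    have "card T = 0 \<or> card T = 1 \<or> card T = 2 \<or> card T = 3" using T by linarith
    then show ?thesis
    proof (elim disjE)
      assume "card T = 0" then show ?thesis using fin by simp
    next
      assume "card T = 1" then show ?thesis by (auto simp: card_1_singleton_iff)
    next
      assume "card T = 2" then show ?thesis by (auto simp: card_2_iff)
    next
      assume "card T = 3"
      then obtain x y z where xyz: "T = {x,y,z}" "x \<noteq> y" "y \<noteq> z" "x \<noteq> z" by (auto simp: card_3_iff)
      show ?thesis
      proof
        assume "affine_dependent T"
        then have "collinear {x,y,z}" using xyz collinear_3_eq_affine_dependent by blast
        then have "collinear {0, x - y, z - y}" using collinear_3[of x y z] by (simp add: NO_MATCH_def)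
        then have "\<exists>c. z - y = c *\<^sub>R (x - y)" using xyz by (auto simp: collinear_lemma)
        then obtain c where c: "z - y = c *\<^sub>R (x - y)" by blast
        have "dt (x - y) (z - y) = dt (x - y) (c *\<^sub>R (x - y))" using c by simp
        also have "\<dots> = 0" by (simp add: dt_def algebra_simps)
        finally have "dt (x - y) (z - y) = 0" .
        then show False using assms(2) xyz T by auto
      qed
    qed
  qed
qed

definition e1 :: "(real^2) set" where "e1 = {vector [4,-1], vector [2,4], vector [-2,0]}"
definition e2 :: "(real^2) set" where "e2 = {vector [-4,2], vector [3,1], vector [1,-1]}"
definition e3 :: "(real^2) set" where "e3 = {vector [3,2], vector [-2,3], vector [1,4]}"

lemma v2_eq: "(vector [a,b] :: real^2) = vector [c,d] \<longleftrightarrow> a = c \<and> b = d"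
  by (simp add: vec2_eq)
lemma v2_0: "(vector [a,b] :: real^2) = 0 \<longleftrightarrow> a = 0 \<and> b = 0"
  by (simp add: vec2_eq)
lemma v2_dt: "dt (vector [a,b]) (vector [c,d]) = a * d - b * c" by (simp add: dt_def)
lemma v2_diff: "(vector [a,b] :: real^2) - vector [c,d] = vector [a - c, b - d]"
  by (simp add: vec2_eq)
lemma v2_zero: "(0::real^2) = vector [0,0]" by (simp add: vec2_eq)

lemma ex_gp: "gen_pos2 (e1 \<union> e2 \<union> e3 \<union> {0})"
  apply (rule gen_pos2_I)
   apply (simp add: e1_def e2_def e3_def)
  unfolding e1_def e2_def e3_def v2_zero
  by (simp add: v2_eq v2_diff v2_dt)

lemma hull_tri_I:
  assumes "dt x y \<noteq> 0" "dt y z \<noteq> 0" "dt z x \<noteq> 0" "tri x y z" "{x,y,z} \<subseteq> S"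
  shows "0 \<in> convex hull S"
  using hull3_tri[OF assms(1-3)] assms(4) hull_mono[OF assms(5)] by blast

lemma ex_adm: "admissible_config e1 e2 e3"
proof -
  have c: "card e1 = 3" "card e2 = 3" "card e3 = 3"
    by (simp_all add: e1_def e2_def e3_def v2_eq)
  have d: "e1 \<inter> e2 = {}" "e1 \<inter> e3 = {}" "e2 \<inter> e3 = {}"
    by (simp_all add: e1_def e2_def e3_def v2_eq)
  have z: "0 \<notin> e1 \<union> e2 \<union> e3"
    by (simp add: e1_def e2_def e3_def v2_eq v2_zero)
  have h1: "0 \<in> convex hull (e1 \<union> e2)"
    by (rule hull_tri_I[of "vector [4,-1]" "vector [2,4]" "vector [-2,0]"])
       (simp_all add: v2_dt tri_def e1_def)
  have h2: "0 \<in> convex hull (e1 \<union> e3)"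
    by (rule hull_tri_I[of "vector [4,-1]" "vector [2,4]" "vector [-2,0]"])
       (simp_all add: v2_dt tri_def e1_def)
  have h3: "0 \<in> convex hull (e2 \<union> e3)"
    by (rule hull_tri_I[of "vector [-4,2]" "vector [3,1]" "vector [1,-1]"])
       (simp_all add: v2_dt tri_def e2_def)
  show ?thesis unfolding admissible_config_def using c d z ex_gp h1 h2 h3 by blast
qed

lemma ex_count: "colourful_count e1 e2 e3 = 3"
proof -
  have dd: "dt x y \<noteq> 0 \<and> dt y z \<noteq> 0 \<and> dt z x \<noteq> 0" if "x \<in> e1" "y \<in> e2" "z \<in> e3" for x y z
    using that by (auto simp: e1_def e2_def e3_def v2_dt)
  have "{(x1, x2, x3). x1 \<in> e1 \<and> x2 \<in> e2 \<and> x3 \<in> e3 \<and> 0 \<in> convex hull {x1, x2, x3}}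
      = {(x1, x2, x3). x1 \<in> e1 \<and> x2 \<in> e2 \<and> x3 \<in> e3 \<and> tri x1 x2 x3}"
    using hull3_tri dd by blast
  also have "\<dots> = {(vector [-2,0], vector [1,-1], vector [3,2]), (vector [-2,0], vector [1,-1], vector [-2,3]),
                    (vector [-2,0], vector [1,-1], vector [1,4])}"
    by (auto simp: e1_def e2_def e3_def tri_def v2_dt)
  finally show ?thesis unfolding colourful_count_def by (simp add: v2_eq)
qed


theorem mainTheorem3:
  shows "(\<forall>S1 S2 S3. admissible_config S1 S2 S3 \<longrightarrow> 3 \<le> colourful_count S1 S2 S3) \<and>
         (\<exists>S1 S2 S3. admissible_config S1 S2 S3 \<and> colourful_count S1 S2 S3 = 3)"
proof
  show "\<forall>S1 S2 S3. admissible_config S1 S2 S3 \<longrightarrow> 3 \<le> colourful_count S1 S2 S3"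
    using lower by blast
  show "\<exists>S1 S2 S3. admissible_config S1 S2 S3 \<and> colourful_count S1 S2 S3 = 3"
    using ex_adm ex_count by blast
qed

end
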